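(* Let $V$ be a $2$-dimensional real vector space. For every $T\in\widetilde C_1$, the isotropy subgroup $\{g\in\mathrm{Gl}(V): g\cdot T=T\}$ has dimension at least $1$. Equivalently, on a $2$-dimensional manifold every $1$-jet at $x$ of a symmetric linear connection has an isotropy group of dimension at least $1$ for the action of $\mathrm{Diff}_x$ on $\widetilde{\mathfrak{C}}^1_2\cong\widetilde C_1/\mathrm{Gl}_2$.
   Context: $\widetilde C_1$ is the space of $(1,3)$-tensors $\Gamma^k_{ijl}$ on $V$ symmetric in $i,j$ whose symmetrization over the three covariant indices vanishes, with the standard tensorial action of $\mathrm{Gl}(V)$. (It corresponds to the space of first normal tensors $\Gamma^1_x$ of symmetric linear connections: in a normal chart $(\Gamma^1_x)^k_{ijl}=\partial_l\Gamma^k_{ij}(0)$.) $\mathrm{Diff}_x$ is the group of germs of diffeomorphisms fixing $x$, acting on connections by $(\tau\cdot\nabla)_D\bar D=\tau_*^{-1}(\nabla_{\tau_*D}\tau_*\bar D)$. *)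

theory Defs
  imports "HOL-Analysis.Analysis" "HOL-Library.Numeral_Type"
begin

text \<open>V = R^2 with basis indexed by the type 2. A (1,3)-tensor T^k_{ijl} is
  represented as T k i j l. Elements of Gl(V) are invertible matrices real^2^2,
  with g $ k $ a the (k,a) entry.\<close>

type_synonym tensor13 = "2 \<Rightarrow> 2 \<Rightarrow> 2 \<Rightarrow> 2 \<Rightarrow> real"

definition C1t :: "tensor13 set" where
  "C1t = {T. (\<forall>k i j l. T k i j l = T k j i l) \<and>
             (\<forall>k i j l. T k i j l + T k i l j + T k j i l + T k j l i + T k l i j + T k l j i = 0)}"

definition tens_act :: "real^2^2 \<Rightarrow> tensor13 \<Rightarrow> tensor13" where
  "tens_act g T = (\<lambda>k i j l. \<Sum>a\<in>UNIV. \<Sum>b\<in>UNIV. \<Sum>c\<in>UNIV. \<Sum>d\<in>UNIV.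
      g $ k $ a * T a b c d * matrix_inv g $ b $ i * matrix_inv g $ c $ j * matrix_inv g $ d $ l)"

definition isotropy :: "tensor13 \<Rightarrow> (real^2^2) set" where
  "isotropy T = {g. invertible g \<and> tens_act g T = T}"

text \<open>Lie algebra (tangent space at the identity) of a subgroup H of Gl(V):
  the velocities at 0 of curves in H through the identity.  The dimension of the
  (closed, Lie) subgroup H is the dimension of this space.\<close>
definition lie_algebra :: "(real^2^2) set \<Rightarrow> (real^2^2) set" where
  "lie_algebra H = {A. \<exists>\<gamma>. \<gamma> 0 = mat 1 \<and> (\<forall>t. \<gamma> t \<in> H) \<and> (\<gamma> has_vector_derivative A) (at 0)}"

definition group_dim :: "(real^2^2) set \<Rightarrow> nat" where
  "group_dim H = dim (lie_algebra H)"

end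

theory Submission
  imports Defs
begin

lemma matrix_inv_eqI:
  fixes A B :: "real^2^2"
  assumes "A ** B = mat 1" "B ** A = mat 1"
  shows "matrix_inv A = B"
proof -
  have "\<exists>A'. A ** A' = mat 1 \<and> A' ** A = mat 1" using assms by blast
  then have h: "A ** matrix_inv A = mat 1 \<and> matrix_inv A ** A = mat 1"
    unfolding matrix_inv_def by (rule someI_ex)
  have "matrix_inv A = matrix_inv A ** (A ** B)" using assms by (simp add: matrix_mul_rid)
  also have "\<dots> = (matrix_inv A ** A) ** B" by (simp add: matrix_mul_assoc)
  also have "\<dots> = B" using h by (simp add: matrix_mul_lid)
  finally show ?thesis .
qed

lemma inv2:
  fixes g :: "real^2^2"
  assumes "g$1$1*g$2$2 - g$1$2*g$2$1 = 1"
  shows "matrix_inv g = vector[vector[g$2$2, -g$1$2], vector[-g$2$1, g$1$1]]"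
  apply (rule matrix_inv_eqI)
  using assms by (auto simp: vec_eq_iff forall_2 matrix_matrix_mult_def sum_2 mat_def algebra_simps)

lemma C1_entries:
  assumes "T \<in> C1t"
  shows "T k 1 1 1 = 0" "T k 2 2 2 = 0" "T k 1 2 1 = - T k 1 1 2 / 2" "T k 2 1 1 = - T k 1 1 2 / 2"
    "T k 1 2 2 = - T k 2 2 1 / 2" "T k 2 1 2 = - T k 2 2 1 / 2"
proof -
  have s: "\<And>k i j l. T k i j l = T k j i l" and c: "\<And>k i j l. T k i j l + T k i l j + T k j i l + T k j l i + T k l i j + T k l j i = 0"
    using assms unfolding C1t_def by auto
  show "T k 1 1 1 = 0" using c[of k 1 1 1] by simp
  show "T k 2 2 2 = 0" using c[of k 2 2 2] by simp
  show "T k 1 2 1 = - T k 1 1 2 / 2" using c[of k 1 1 2] s[of k 1 2 1] by simp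
  show "T k 2 1 1 = - T k 1 1 2 / 2" using c[of k 1 1 2] s[of k 1 2 1] by simp
  show "T k 1 2 2 = - T k 2 2 1 / 2" using c[of k 2 2 1] s[of k 1 2 2] by simp
  show "T k 2 1 2 = - T k 2 2 1 / 2" using c[of k 2 2 1] s[of k 1 2 2] by simp
qed

lemma eq_det: "L = R * D^2 \<Longrightarrow> D = 1 \<Longrightarrow> (L::real) = R" by simp

lemma stab:
  fixes g :: "real^2^2" and x y n r u tau ka :: real
  assumes T: "T \<in> C1t"
  and g: "g$1$1 = x + y*n" "g$1$2 = y*r" "g$2$1 = y*u" "g$2$2 = x - y*n"
  and det: "(x + y*n)*(x - y*n) - (y*r)*(y*u) = 1"
  and M: "T 1 1 1 2 = -2*(tau+ka*n)" "T 1 2 2 1 = 2*(ka*r)" "T 2 1 1 2 = -2*(ka*u)" "T 2 2 2 1 = 2*(tau-ka*n)"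
  shows "tens_act g T = T"
proof -
  have det': "g$1$1*g$2$2 - g$1$2*g$2$1 = 1" using det g by simp
  have "\<forall>k i j l. tens_act g T k i j l = T k i j l"
    unfolding tens_act_def inv2[OF det'] sum_2 forall_2
    apply (intro conjI)
    apply (simp_all only: C1_entries[OF T] vector_2 g M)
    apply ((rule eq_det[where D="(x + y*n)*(x - y*n) - (y*r)*(y*u)"], algebra, rule det)+)
    done
  then show ?thesis by (intro ext) blast
qed

lemma pos_aux:
  fixes d e z :: real
  assumes e: "e = 1 / (1 + \<bar>d\<bar>)" and z: "\<bar>z\<bar> \<le> 1"
  shows "1 + (e*z)^2 * d > 0"
proof -
  have z2: "z^2 \<le> 1" using z abs_square_le_1 by blast
  have "(e*z)^2 \<le> e^2" using mult_left_mono[OF z2, of "e^2"] by (simp add: power_mult_distrib)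
  have X: "(1 + \<bar>d\<bar>)^2 = 1 + \<bar>d\<bar> + \<bar>d\<bar>*(1 + \<bar>d\<bar>)" by (simp add: power2_eq_square algebra_simps)
  have "\<bar>d\<bar>*(1 + \<bar>d\<bar>) \<ge> 0" by simp
  then have lt: "\<bar>d\<bar> < (1 + \<bar>d\<bar>)^2" using X by linarith
  have "e^2 * \<bar>d\<bar> = \<bar>d\<bar> / (1 + \<bar>d\<bar>)^2" by (simp add: e power_divide)
  also have "\<dots> < 1" using lt by (subst pos_divide_less_eq) auto
  finally have ed: "e^2 * \<bar>d\<bar> < 1" .
  have "(e*z)^2 * \<bar>d\<bar> \<le> e^2 * \<bar>d\<bar>" using \<open>(e*z)^2 \<le> e^2\<close> by (simp add: mult_right_mono)
  moreover have "- ((e*z)^2 * \<bar>d\<bar>) \<le> (e*z)^2 * d"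
    using mult_left_mono[of "-\<bar>d\<bar>" d "(e*z)^2"] by simp
  ultimately show ?thesis using ed by linarith
qed

lemma curve_in_lie:
  fixes T :: tensor13 and n r u tau ka :: real
  assumes T: "T \<in> C1t"
  and M: "T 1 1 1 2 = -2*(tau+ka*n)" "T 1 2 2 1 = 2*(ka*r)" "T 2 1 1 2 = -2*(ka*u)" "T 2 2 2 1 = 2*(tau-ka*n)"
  and nz: "n \<noteq> 0 \<or> r \<noteq> 0 \<or> u \<noteq> 0"
  shows "group_dim (isotropy T) \<ge> 1"
proof -
  define N :: "real^2^2" where "N = vector[vector[n, r], vector[u, -n]]"
  define dl where "dl = -(n*n + r*u)"
  define e where "e = 1 / (1 + \<bar>dl\<bar>)"
  define S where "S = (\<lambda>t::real. sqrt (1 + (e * sin t)^2 * dl))"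
  define \<gamma> where "\<gamma> = (\<lambda>t. (1 / S t) *\<^sub>R (mat 1 :: real^2^2) + (e * sin t / S t) *\<^sub>R N)"
  have pos: "1 + (e * sin t)^2 * dl > 0" for t by (rule pos_aux[OF e_def]) simp
  have S0: "S t > 0" for t using pos[of t] by (simp add: S_def)
  have SS: "(S t)^2 = 1 + (e * sin t)^2 * dl" for t using pos[of t] by (simp add: S_def)
  have e0: "e > 0" by (simp add: e_def)
  have iso: "\<gamma> t \<in> isotropy T" for t
  proof -
    let ?x = "1 / S t" and ?y = "e * sin t / S t"
    have g: "\<gamma> t $1$1 = ?x + ?y*n" "\<gamma> t $1$2 = ?y*r" "\<gamma> t $2$1 = ?y*u" "\<gamma> t $2$2 = ?x - ?y*n"
      by (simp_all add: \<gamma>_def N_def mat_def)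
    have det: "(?x + ?y*n)*(?x - ?y*n) - (?y*r)*(?y*u) = 1"
    proof -
      have "(?x + ?y*n)*(?x - ?y*n) - (?y*r)*(?y*u) = (1 + (e * sin t)^2 * dl) / (S t)^2"
        using S0[of t] by (simp add: dl_def field_simps power2_eq_square)
      then show ?thesis using SS[of t] pos[of t] by simp
    qed
    have "tens_act (\<gamma> t) T = T" by (rule stab[OF T g det M])
    moreover have "invertible (\<gamma> t)"
      unfolding invertible_det_nz det_2 using det g by simp
    ultimately show ?thesis by (simp add: isotropy_def)
  qed
  have "\<gamma> 0 = mat 1" by (simp add: \<gamma>_def S_def)
  have der: "(\<gamma> has_vector_derivative (e *\<^sub>R N)) (at 0)"
    unfolding \<gamma>_def S_def
    apply (rule has_vector_derivative_eq_rhs)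
     apply (rule derivative_eq_intros refl | simp)+
    done
  have "e *\<^sub>R N \<in> lie_algebra (isotropy T)"
    unfolding lie_algebra_def using \<open>\<gamma> 0 = mat 1\<close> iso der by blast
  moreover have "e *\<^sub>R N \<noteq> 0"
    using e0 nz by (auto simp: N_def vec_eq_iff forall_2)
  ultimately have "dim {e *\<^sub>R N} \<le> dim (lie_algebra (isotropy T))"
    by (intro dim_subset) auto
  then show ?thesis using \<open>e *\<^sub>R N \<noteq> 0\<close> by (simp add: group_dim_def)
qed

theorem mainTheorem12:
  assumes "T \<in> C1t"
  shows "group_dim (isotropy T) \<ge> 1"
proof (cases "T 1 1 1 2 = - T 2 2 2 1 \<and> T 1 2 2 1 = 0 \<and> T 2 1 1 2 = 0")
  case True
  show ?thesis
    by (rule curve_in_lie[OF assms, where tau="T 2 2 2 1 / 2" and ka=0 and n=1 and r=0 and u=0])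
       (use True in auto)
next
  case False
  show ?thesis
    by (rule curve_in_lie[OF assms, where tau="(T 2 2 2 1 - T 1 1 1 2)/4" and ka=1
          and n="(- T 1 1 1 2 - T 2 2 2 1)/4" and r="T 1 2 2 1 / 2" and u="- T 2 1 1 2 / 2"])
       (use False in \<open>auto simp: field_simps\<close>)
qed

end
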